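(* For any function $g=g(\mathbf{x}_p)\in C^1(\mathbb{R}^{p+1},\mathbb{A})$ (depending only on $\mathbf{x}_p$) and any $k\in\mathbb{N}$: $$D_{\mathbf{x}}(\underline{\mathbf{x}}_q^{2k}g)=\underline{\mathbf{x}}_q^{2k}(D_{\mathbf{x}_p}g)-2k\,\underline{\mathbf{x}}_q^{2k-1}g,\qquad D_{\mathbf{x}}(\underline{\mathbf{x}}_q^{2k+1}g)=\underline{\mathbf{x}}_q^{2k+1}(\overline{D}_{\mathbf{x}_p}g)-(2k+q)\,\underline{\mathbf{x}}_q^{2k}g,$$ $$\overline{D}_{\mathbf{x}}(\underline{\mathbf{x}}_q^{2k}g)=\underline{\mathbf{x}}_q^{2k}(\overline{D}_{\mathbf{x}_p}g)+2k\,\underline{\mathbf{x}}_q^{2k-1}g,\qquad \overline{D}_{\mathbf{x}}(\underline{\mathbf{x}}_q^{2k+1}g)=\underline{\mathbf{x}}_q^{2k+1}(D_{\mathbf{x}_p}g)+(2k+q)\,\underline{\mathbf{x}}_q^{2k}g.$$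
   Context: Let $\mathbb{A}$ be a real alternative algebra (the associator $[a,b,c]=(ab)c-a(bc)$ is an alternating trilinear function) with unity $1$, of finite real dimension $d>1$, equipped with an anti-involution $a\mapsto a^c$ (real linear, $a^c=a$ for real $a$, $(a^c)^c=a$, $(ab)^c=b^ca^c$). Let $t(x)=x+x^c$, $n(x)=xx^c$, $\mathbb{S}_{\mathbb{A}}=\{x: t(x)=0,\ n(x)=1\}$ (assumed nonempty) and $Q_{\mathbb{A}}=\mathbb{R}\cup\{x: t(x)\in\mathbb{R},\ n(x)\in\mathbb{R},\ 4n(x)>t(x)^2\}$. Let $M$ be a real subspace with $\mathbb{R}\subsetneq M\subseteq Q_{\mathbb{A}}$ having a basis $(v_0,\dots,v_m)$, $m\ge1$, $v_0=1$, $v_s\in\mathbb{S}_{\mathbb{A}}$, $v_sv_t=-v_tv_s$ for distinct $s,t\ge1$. Identify $x=\sum x_sv_s\in M$ with $(x_0,\dots,x_m)\in\mathbb{R}^{m+1}$; differentiate componentwise. Fix $p\in\{0,\dots,m-1\}$, $q=m-p$; $\mathbf{x}=\mathbf{x}_p+\underline{\mathbf{x}}_q$ with $\mathbf{x}_p=\sum_{s=0}^px_sv_s\in\mathbb{R}^{p+1}$, $\underline{\mathbf{x}}_q=\sum_{s=p+1}^m x_sv_s$; powers $\underline{\mathbf{x}}_q^j$ are taken in $\mathbb{A}$ (terms with coefficient $2k=0$ vanish). $D_{\mathbf{x}_p}f=\sum_{s=0}^p v_s\partial_{x_s}f$, $\overline{D}_{\mathbf{x}_p}f=\partial_{x_0}f-\sum_{s=1}^pv_s\partial_{x_s}f$,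 $D_{\mathbf{x}}f=\sum_{s=0}^mv_s\partial_{x_s}f$, $\overline{D}_{\mathbf{x}}f=\partial_{x_0}f-\sum_{s=1}^mv_s\partial_{x_s}f$ (all acting on the left). *)

theory Defs
  imports "HOL-Analysis.Analysis"
begin

text \<open>The algebra A is a finite-dimensional real vector space (type class euclidean_space,
  whose inner product is irrelevant) carrying a multiplication mul, a unity e and
  a conjugation cj.\<close>

definition associator :: "('a \<Rightarrow> 'a \<Rightarrow> 'a) \<Rightarrow> 'a \<Rightarrow> 'a \<Rightarrow> 'a \<Rightarrow> 'a::real_vector" where
  "associator mul a b c = mul (mul a b) c - mul a (mul b c)"

text \<open>Real alternative algebra with unity: real-bilinear multiplication, two-sided unit,
  and the associator is an alternating trilinear map (it vanishes whenever two arguments agree;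
  trilinearity follows from bilinearity of mul).\<close>
definition alt_algebra :: "('a \<Rightarrow> 'a \<Rightarrow> 'a) \<Rightarrow> 'a::real_vector \<Rightarrow> bool" where
  "alt_algebra mul e \<longleftrightarrow> bilinear mul \<and> (\<forall>a. mul e a = a \<and> mul a e = a) \<and>
     (\<forall>a b. associator mul a a b = 0 \<and> associator mul a b a = 0 \<and> associator mul b a a = 0)"

definition reals_in :: "'a \<Rightarrow> 'a::real_vector set" where
  "reals_in e = range (\<lambda>r::real. r *\<^sub>R e)"

definition anti_involution :: "('a \<Rightarrow> 'a \<Rightarrow> 'a) \<Rightarrow> 'a::real_vector \<Rightarrow> ('a \<Rightarrow> 'a) \<Rightarrow> bool" where
  "anti_involution mul e cj \<longleftrightarrow> linear cj \<and> (\<forall>r::real. cj (r *\<^sub>R e) = r *\<^sub>R e) \<and>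
     (\<forall>a. cj (cj a) = a) \<and> (\<forall>a b. cj (mul a b) = mul (cj b) (cj a))"

definition trace_A :: "('a \<Rightarrow> 'a) \<Rightarrow> 'a \<Rightarrow> 'a::real_vector" where
  "trace_A cj x = x + cj x"

definition norm_A :: "('a \<Rightarrow> 'a \<Rightarrow> 'a) \<Rightarrow> ('a \<Rightarrow> 'a) \<Rightarrow> 'a \<Rightarrow> 'a" where
  "norm_A mul cj x = mul x (cj x)"

definition sphere_A :: "('a \<Rightarrow> 'a \<Rightarrow> 'a) \<Rightarrow> 'a \<Rightarrow> ('a \<Rightarrow> 'a) \<Rightarrow> 'a::real_vector set" where
  "sphere_A mul e cj = {x. trace_A cj x = 0 \<and> norm_A mul cj x = e}"

definition quadcone_A :: "('a \<Rightarrow> 'a \<Rightarrow> 'a) \<Rightarrow> 'a \<Rightarrow> ('a \<Rightarrow> 'a) \<Rightarrow> 'a::real_vector set" where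
  "quadcone_A mul e cj = reals_in e \<union>
     {x. \<exists>t n::real. trace_A cj x = t *\<^sub>R e \<and> norm_A mul cj x = n *\<^sub>R e \<and> 4 * n > t\<^sup>2}"

primrec apow :: "('a \<Rightarrow> 'a \<Rightarrow> 'a) \<Rightarrow> 'a \<Rightarrow> 'a \<Rightarrow> nat \<Rightarrow> 'a" where
  "apow mul e a 0 = e"
| "apow mul e a (Suc n) = mul a (apow mul e a n)"

text \<open>Points of R^(m+1) are functions nat \<Rightarrow> real (coordinates beyond m are ignored).
  Partial derivative with respect to the s-th coordinate.\<close>
definition partial :: "((nat \<Rightarrow> real) \<Rightarrow> 'a::real_normed_vector) \<Rightarrow> nat \<Rightarrow> (nat \<Rightarrow> real) \<Rightarrow> 'a" where
  "partial f s x = vector_derivative (\<lambda>t. f (x(s := t))) (at (x s))"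

definition C1_in_first :: "nat \<Rightarrow> ((nat \<Rightarrow> real) \<Rightarrow> 'a::real_normed_vector) \<Rightarrow> bool" where
  "C1_in_first p g \<longleftrightarrow>
     (\<forall>x y. (\<forall>s\<le>p. x s = y s) \<longrightarrow> g x = g y) \<and>
     continuous_on UNIV g \<and>
     (\<forall>s\<le>p. \<forall>x. (\<lambda>t. g (x(s := t))) differentiable (at (x s))) \<and>
     (\<forall>s\<le>p. continuous_on UNIV (partial g s))"

definition Dop :: "('a \<Rightarrow> 'a \<Rightarrow> 'a) \<Rightarrow> (nat \<Rightarrow> 'a) \<Rightarrow> nat \<Rightarrow> ((nat \<Rightarrow> real) \<Rightarrow> 'a::real_normed_vector) \<Rightarrow> (nat \<Rightarrow> real) \<Rightarrow> 'a" where
  "Dop mul v n f x = (\<Sum>s\<le>n. mul (v s) (partial f s x))"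

definition Dbar :: "('a \<Rightarrow> 'a \<Rightarrow> 'a) \<Rightarrow> (nat \<Rightarrow> 'a) \<Rightarrow> nat \<Rightarrow> ((nat \<Rightarrow> real) \<Rightarrow> 'a::real_normed_vector) \<Rightarrow> (nat \<Rightarrow> real) \<Rightarrow> 'a" where
  "Dbar mul v n f x = partial f 0 x - (\<Sum>s\<in>{1..n}. mul (v s) (partial f s x))"

definition xq :: "(nat \<Rightarrow> 'a::real_vector) \<Rightarrow> nat \<Rightarrow> nat \<Rightarrow> (nat \<Rightarrow> real) \<Rightarrow> 'a" where
  "xq v p m x = (\<Sum>s\<in>{p+1..m}. x s *\<^sub>R v s)"

end

theory Submission
  imports Defs
begin

lemma bl_rsum: assumes "bilinear h" shows "h x (\<Sum>s\<in>S. f s) = (\<Sum>s\<in>S. h x (f s))"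
proof (cases "finite S")
  case True thus ?thesis by (induction S rule: finite_induct) (simp_all add: bilinear_rzero[OF assms] bilinear_radd[OF assms])
next
  case False thus ?thesis by (simp add: bilinear_rzero[OF assms])
qed

lemma bl_lsum: assumes "bilinear h" shows "h (\<Sum>s\<in>S. f s) y = (\<Sum>s\<in>S. h (f s) y)"
proof (cases "finite S")
  case True thus ?thesis by (induction S rule: finite_induct) (simp_all add: bilinear_lzero[OF assms] bilinear_ladd[OF assms])
next
  case False thus ?thesis by (simp add: bilinear_lzero[OF assms])
qed

lemma assoc_lin:
  assumes bl: "bilinear mul" and a0: "\<And>a b. mul (mul a a) b = mul a (mul a b)"
  shows "mul a (mul b h) + mul b (mul a h) = mul (mul a b + mul b a) h"
proof -
  have "mul (mul (a+b) (a+b)) h = mul (a+b) (mul (a+b) h)" by (rule a0)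
  then have "mul (mul a a) h + mul (mul a b) h + mul (mul b a) h + mul (mul b b) h
     = mul a (mul a h) + mul a (mul b h) + mul b (mul a h) + mul b (mul b h)"
    by (simp add: bilinear_ladd[OF bl] bilinear_radd[OF bl] algebra_simps)
  then show ?thesis using a0[of a h] a0[of b h] by (simp add: bilinear_ladd[OF bl] algebra_simps)
qed

lemma anti_sum:
  assumes bl: "bilinear mul" and an: "\<forall>t\<in>S. mul w (v t) = - mul (v t) w"
  shows "mul w (\<Sum>t\<in>S. a t *\<^sub>R v t) = - mul (\<Sum>t\<in>S. a t *\<^sub>R v t) w"
  using an by (simp add: bl_rsum[OF bl] bl_lsum[OF bl] bilinear_rmul[OF bl] bilinear_lmul[OF bl] sum_negf[symmetric])

lemma sq_sum:
  assumes bl: "bilinear mul" and fin: "finite S"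
    and sq: "\<forall>s\<in>S. mul (v s) (v s) = - e"
    and an: "\<forall>s\<in>S. \<forall>t\<in>S. s \<noteq> t \<longrightarrow> mul (v s) (v t) = - mul (v t) (v s)"
  shows "mul (\<Sum>s\<in>S. a s *\<^sub>R v s) (\<Sum>s\<in>S. a s *\<^sub>R v s) = - (\<Sum>s\<in>S. (a s)^2) *\<^sub>R e"
  using fin sq an
proof (induction S rule: finite_induct)
  case empty
  have "mul 0 0 = 0" by (rule bilinear_lzero[OF bl])
  then show ?case by simp
next
  case (insert i F)
  let ?Y = "\<Sum>s\<in>F. a s *\<^sub>R v s"
  have an': "mul (v i) ?Y = - mul ?Y (v i)"
  proof (rule anti_sum[OF bl], intro ballI)
    fix t assume "t \<in> F"
    then have "i \<noteq> t" "t \<in> insert i F" using insert(2) by auto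
    then show "mul (v i) (v t) = - mul (v t) (v i)" using insert.prems(2) by blast
  qed
  have IH: "mul ?Y ?Y = - (\<Sum>s\<in>F. (a s)^2) *\<^sub>R e" by (rule insert.IH) (use insert.prems in blast)+
  have "mul (a i *\<^sub>R v i + ?Y) (a i *\<^sub>R v i + ?Y) = (a i * a i) *\<^sub>R mul (v i) (v i) + a i *\<^sub>R (mul (v i) ?Y + mul ?Y (v i)) + mul ?Y ?Y"
    by (simp add: bilinear_ladd[OF bl] bilinear_radd[OF bl] bilinear_lmul[OF bl] bilinear_rmul[OF bl] scaleR_add_right add.assoc)
  also have "\<dots> = - (a i * a i + (\<Sum>s\<in>F. (a s)^2)) *\<^sub>R e"
    using insert.prems(1) an' IH by (simp add: scaleR_add_left scaleR_diff_left)
  finally show ?case using insert(1,2) by (simp add: power2_eq_square)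
qed

lemma apow_sq:
  assumes bl: "bilinear mul" and unit: "\<forall>a. mul e a = a \<and> mul a e = a"
    and a0: "\<And>h. mul (mul a a) h = mul a (mul a h)" and sq: "mul a a = c *\<^sub>R e"
  shows "apow mul e a (2*k) = c^k *\<^sub>R e \<and> apow mul e a (2*k+1) = c^k *\<^sub>R a"
proof (induction k)
  case 0 thus ?case using unit by simp
next
  case (Suc k)
  have e: "apow mul e a (2*Suc k) = c^Suc k *\<^sub>R e"
  proof -
    have "apow mul e a (2*Suc k) = mul a (mul a (apow mul e a (2*k)))" by simp
    also have "\<dots> = mul (mul a a) (apow mul e a (2*k))" using a0 by simp
    also have "\<dots> = c^Suc k *\<^sub>R e" using Suc sq unit by (simp add: bilinear_lmul[OF bl] bilinear_rmul[OF bl])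
    finally show ?thesis .
  qed
  then show ?case using unit by (simp add: bilinear_rmul[OF bl])
qed

lemma low_deriv:
  assumes L: "bounded_linear L" and d: "(\<lambda>t. g (x(s := t))) differentiable (at (x s))"
  shows "vector_derivative (\<lambda>t. L (g (x(s := t)))) (at (x s)) = L (partial g s x)"
proof -
  have "((\<lambda>t. g (x(s := t))) has_vector_derivative partial g s x) (at (x s))"
    using d unfolding partial_def by (simp add: vector_derivative_works[symmetric])
  then show ?thesis by (intro vector_derivative_at bounded_linear.has_vector_derivative[OF L])
qed

lemma cderiv: "((\<lambda>t::real. (-(A+t^2))^k) has_real_derivative (real k * (-(A + y^2))^(k-1) * (-(2 * y)))) (at y)"
  by (auto intro!: derivative_eq_intros)

lemma lin_deriv: "((\<lambda>t::real. b + t *\<^sub>R w) has_vector_derivative w) (at y)"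
  by (auto intro!: derivative_eq_intros)

lemma kpow: "real k * z^(k-1) * z = real k * z^k"
  by (cases k) auto

lemma core_lemma:
  fixes mul :: "'a::euclidean_space \<Rightarrow> 'a \<Rightarrow> 'a" and e :: 'a and cj :: "'a \<Rightarrow> 'a"
    and v :: "nat \<Rightarrow> 'a" and m p q k :: nat
    and g :: "(nat \<Rightarrow> real) \<Rightarrow> 'a" and x :: "nat \<Rightarrow> real"
  assumes alg: "alt_algebra mul e"
    and inv: "anti_involution mul e cj"
    and m1: "m \<ge> 1"
    and v0: "v 0 = e"
    and vS: "\<forall>s\<in>{1..m}. v s \<in> sphere_A mul e cj"
    and vanti: "\<forall>s\<in>{1..m}. \<forall>t\<in>{1..m}. s \<noteq> t \<longrightarrow> mul (v s) (v t) = - mul (v t) (v s)"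
    and p: "p \<le> m - 1"
    and q: "q = m - p"
    and g: "C1_in_first p g"
  shows
    "(Dop mul v m (\<lambda>y. mul (apow mul e (xq v p m y) (2*k)) (g y)) x
       = mul (apow mul e (xq v p m x) (2*k)) (Dop mul v p g x)
         - real (2*k) *\<^sub>R mul (apow mul e (xq v p m x) (2*k - 1)) (g x))
   \<and> (Dop mul v m (\<lambda>y. mul (apow mul e (xq v p m y) (2*k+1)) (g y)) x
       = mul (apow mul e (xq v p m x) (2*k+1)) (Dbar mul v p g x)
         - real (2*k + q) *\<^sub>R mul (apow mul e (xq v p m x) (2*k)) (g x))
   \<and> (Dbar mul v m (\<lambda>y. mul (apow mul e (xq v p m y) (2*k)) (g y)) x
       = mul (apow mul e (xq v p m x) (2*k)) (Dbar mul v p g x)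
         + real (2*k) *\<^sub>R mul (apow mul e (xq v p m x) (2*k - 1)) (g x))
   \<and> (Dbar mul v m (\<lambda>y. mul (apow mul e (xq v p m y) (2*k+1)) (g y)) x
       = mul (apow mul e (xq v p m x) (2*k+1)) (Dop mul v p g x)
         + real (2*k + q) *\<^sub>R mul (apow mul e (xq v p m x) (2*k)) (g x))"
proof -
  have bl: "bilinear mul" and unit: "\<forall>a. mul e a = a \<and> mul a e = a"
    and a0: "\<And>a b. mul (mul a a) b = mul a (mul a b)"
    using alg unfolding alt_algebra_def associator_def by auto
  have blin: "\<And>a. bounded_linear (mul a)" using bl unfolding bilinear_def
    by (simp add: linear_conv_bounded_linear)
  have vsq: "\<forall>s\<in>{1..m}. mul (v s) (v s) = - e"
  proof
    fix s assume "s \<in> {1..m}"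
    then have h: "v s + cj (v s) = 0" "mul (v s) (cj (v s)) = e"
      using vS unfolding sphere_A_def trace_A_def norm_A_def by auto
    from h(1) have "cj (v s) = - v s" by (simp add: eq_neg_iff_add_eq_0 add.commute)
    with h(2) have "- mul (v s) (v s) = e" by (simp add: bilinear_rneg[OF bl])
    then show "mul (v s) (v s) = - e" by auto
  qed
  define S where "S = {p+1..m}"
  have S1: "S \<subseteq> {1..m}" unfolding S_def by auto
  have finS: "finite S" unfolding S_def by simp
  have cardS: "card S = q" unfolding S_def q by simp
  define N where "N y = (\<Sum>r\<in>S. (y r)^2)" for y :: "nat \<Rightarrow> real"
  define X where "X y = xq v p m y" for y
  define c where "c y = (- N y)^k" for y
  have Xs: "X y = (\<Sum>s\<in>S. y s *\<^sub>R v s)" for y unfolding X_def xq_def S_def by simp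
  have Xsq: "mul (X y) (X y) = (- N y) *\<^sub>R e" for y
  proof -
    have "mul (X y) (X y) = - (\<Sum>s\<in>S. (y s)^2) *\<^sub>R e"
      unfolding Xs by (rule sq_sum[OF bl finS]) (use vsq vanti S1 in blast)+
    then show ?thesis unfolding N_def by simp
  qed
  have ap: "apow mul e (X y) (2*k) = c y *\<^sub>R e \<and> apow mul e (X y) (2*k+1) = c y *\<^sub>R X y" for y
    using apow_sq[OF bl unit a0 Xsq] unfolding c_def by blast
  have ap1: "apow mul e (X y) (2*k-1) = (- N y)^(k-1) *\<^sub>R X y" if "k \<ge> 1" for y
  proof -
    have eq: "2*k-1 = 2*(k-1)+1" using that by simp
    have "apow mul e (X y) (2*(k-1)+1) = (- N y)^(k-1) *\<^sub>R X y"
      using apow_sq[OF bl unit a0 Xsq, of y "k-1"] by blast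
    then show ?thesis unfolding eq .
  qed

  have fe: "(\<lambda>y. mul (apow mul e (xq v p m y) (2*k)) (g y)) = (\<lambda>y. c y *\<^sub>R g y)"
    using ap unit unfolding X_def by (simp add: bilinear_lmul[OF bl])
  have fo: "(\<lambda>y. mul (apow mul e (xq v p m y) (2*k+1)) (g y)) = (\<lambda>y. c y *\<^sub>R mul (X y) (g y))"
    using ap unfolding X_def by (simp add: bilinear_lmul[OF bl] del: apow.simps)
  have gdep: "\<And>x y. (\<forall>s\<le>p. x s = y s) \<Longrightarrow> g x = g y"
    and gdiff: "\<And>s x. s \<le> p \<Longrightarrow> (\<lambda>t. g (x(s := t))) differentiable (at (x s))"
    using g unfolding C1_in_first_def by auto
  define G where "G = g x"
  define dg where "dg s = partial g s x" for s
  define a where "a s = real k * (- N x)^(k-1) * (-(2 * x s))" for s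
  have XL: "X (x(s := t)) = X x" "c (x(s := t)) = c x" if "s \<le> p" for s t
  proof -
    have "\<forall>r\<in>S. (x(s := t)) r = x r" using that unfolding S_def by auto
    then show "X (x(s := t)) = X x" "c (x(s := t)) = c x" unfolding Xs c_def N_def
      by (auto intro!: sum.cong)
  qed
  have pe_low: "partial (\<lambda>y. c y *\<^sub>R g y) s x = c x *\<^sub>R dg s" if "s \<le> p" for s
  proof -
    have "partial (\<lambda>y. c y *\<^sub>R g y) s x = vector_derivative (\<lambda>t. c x *\<^sub>R g (x(s := t))) (at (x s))"
      unfolding partial_def using XL[OF that] by simp
    also have "\<dots> = c x *\<^sub>R dg s"
      unfolding dg_def by (rule low_deriv[of "\<lambda>z. c x *\<^sub>R z" g x s, OF bounded_linear_scaleR_right gdiff[OF that]])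
    finally show ?thesis .
  qed
  have po_low: "partial (\<lambda>y. c y *\<^sub>R mul (X y) (g y)) s x = c x *\<^sub>R mul (X x) (dg s)" if "s \<le> p" for s
  proof -
    have "partial (\<lambda>y. c y *\<^sub>R mul (X y) (g y)) s x
       = vector_derivative (\<lambda>t. c x *\<^sub>R mul (X x) (g (x(s := t)))) (at (x s))"
      unfolding partial_def using XL[OF that] by simp
    also have "\<dots> = c x *\<^sub>R mul (X x) (dg s)"
      unfolding dg_def by (rule low_deriv[of "\<lambda>z. c x *\<^sub>R mul (X x) z" g x s, OF bounded_linear_compose[OF bounded_linear_scaleR_right blin] gdiff[OF that]])
    finally show ?thesis .
  qed
  have highs: "partial (\<lambda>y. c y *\<^sub>R g y) s x = a s *\<^sub>R G \<and>
     partial (\<lambda>y. c y *\<^sub>R mul (X y) (g y)) s x = a s *\<^sub>R mul (X x) G + c x *\<^sub>R mul (v s) G"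
    if sS: "s \<in> S" for s
  proof -
    define B where "B = (\<Sum>r\<in>S-{s}. x r *\<^sub>R v r)"
    define A where "A = (\<Sum>r\<in>S-{s}. (x r)^2)"
    have oth: "\<forall>r\<in>S-{s}. (x(s := t)) r = x r" for t by auto
    have XH: "X (x(s := t)) = B + t *\<^sub>R v s" for t
    proof -
      have "X (x(s := t)) = (x(s := t)) s *\<^sub>R v s + (\<Sum>r\<in>S-{s}. (x(s := t)) r *\<^sub>R v r)"
        unfolding Xs by (rule sum.remove[OF finS sS])
      moreover have "(\<Sum>r\<in>S-{s}. (x(s := t)) r *\<^sub>R v r) = B"
        unfolding B_def by (rule sum.cong) auto
      ultimately show ?thesis by simp
    qed
    have NH: "N (x(s := t)) = A + t^2" for t
    proof -
      have "N (x(s := t)) = ((x(s := t)) s)^2 + (\<Sum>r\<in>S-{s}. ((x(s := t)) r)^2)"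
        unfolding N_def by (rule sum.remove[OF finS sS])
      moreover have "(\<Sum>r\<in>S-{s}. ((x(s := t)) r)^2) = A"
        unfolding A_def by (rule sum.cong) auto
      ultimately show ?thesis by simp
    qed
    have Xx: "X x = B + x s *\<^sub>R v s" using XH[of "x s"] by simp
    have Nx: "N x = A + (x s)^2" using NH[of "x s"] by simp
    have gH: "g (x(s := t)) = G" for t unfolding G_def
    proof (rule gdep, intro allI impI)
      fix r assume "r \<le> p"
      moreover have "s > p" using sS unfolding S_def by simp
      ultimately show "(x(s := t)) r = x r" by simp
    qed
    have d1: "((\<lambda>t. (-(A+t^2))^k *\<^sub>R G) has_vector_derivative a s *\<^sub>R G) (at (x s))"
      using has_vector_derivative_scaleR[OF cderiv[of A k "x s"] has_vector_derivative_const[of G]]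
      unfolding a_def Nx by simp
    have d2: "((\<lambda>t. (-(A+t^2))^k *\<^sub>R (mul B G + t *\<^sub>R mul (v s) G)) has_vector_derivative
        (a s *\<^sub>R mul (X x) G + c x *\<^sub>R mul (v s) G)) (at (x s))"
      using has_vector_derivative_scaleR[OF cderiv[of A k "x s"] lin_deriv[of "mul B G" "mul (v s) G" "x s"]]
      unfolding a_def c_def Nx Xx by (simp add: bilinear_ladd[OF bl] bilinear_lmul[OF bl] add.commute)
    have "partial (\<lambda>y. c y *\<^sub>R g y) s x = vector_derivative (\<lambda>t. (-(A+t^2))^k *\<^sub>R G) (at (x s))"
      unfolding partial_def c_def NH gH by simp
    moreover have "partial (\<lambda>y. c y *\<^sub>R mul (X y) (g y)) s x
       = vector_derivative (\<lambda>t. (-(A+t^2))^k *\<^sub>R (mul B G + t *\<^sub>R mul (v s) G)) (at (x s))"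
      unfolding partial_def c_def NH gH XH by (simp add: bilinear_ladd[OF bl] bilinear_lmul[OF bl])
    ultimately show ?thesis using vector_derivative_at[OF d1] vector_derivative_at[OF d2] by simp
  qed

  have anti_low: "mul (v s) (mul (X x) h) = - mul (X x) (mul (v s) h)" if "s \<in> {1..p}" for s h
  proof -
    have "\<forall>t\<in>S. mul (v s) (v t) = - mul (v t) (v s)"
    proof
      fix t assume "t \<in> S"
      then have "t \<in> {1..m}" "s \<in> {1..m}" "s \<noteq> t" using that p unfolding S_def by auto
      then show "mul (v s) (v t) = - mul (v t) (v s)" using vanti by blast
    qed
    then have "mul (v s) (X x) = - mul (X x) (v s)" unfolding Xs by (rule anti_sum[OF bl])
    then have "mul (v s) (X x) + mul (X x) (v s) = 0" by simp
    then have "mul (v s) (mul (X x) h) + mul (X x) (mul (v s) h) = 0"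
      using assoc_lin[OF bl a0, of "v s" "X x" h] bilinear_lzero[OF bl, of h] by simp
    then show ?thesis by (simp add: eq_neg_iff_add_eq_0)
  qed
  have vsS: "mul (v s) (mul (v s) h) = - h" if "s \<in> S" for s h
  proof -
    have "mul (v s) (v s) = - e" using vsq S1 that by blast
    then show ?thesis using a0[of "v s" h] unit by (simp add: bilinear_lneg[OF bl])
  qed
  have sumsplit: "(\<Sum>s\<le>m. f s) = (\<Sum>s\<le>p. f s) + (\<Sum>s\<in>S. f s)" for f :: "nat \<Rightarrow> 'a"
  proof -
    have "{..m} = {..p} \<union> S" "{..p} \<inter> S = {}" unfolding S_def using p m1 by auto
    then show ?thesis using sum.union_disjoint[of "{..p}" S f] finS by simp
  qed
  have sumsplit2: "(\<Sum>s\<in>{1..m}. f s) = (\<Sum>s\<in>{1..p}. f s) + (\<Sum>s\<in>S. f s)" for f :: "nat \<Rightarrow> 'a"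
  proof -
    have "{1..m} = {1..p} \<union> S" "{1..p} \<inter> S = {}" unfolding S_def using p m1 by auto
    then show ?thesis using sum.union_disjoint[of "{1..p}" S f] finS by simp
  qed
  have sumsplit3: "(\<Sum>s\<le>p. f s) = f 0 + (\<Sum>s\<in>{1..p}. f s)" for f :: "nat \<Rightarrow> 'a"
  proof -
    have "{..p} = insert 0 {1..p}" by auto
    then show ?thesis by simp
  qed
  define z where "z = (- N x)^(k-1)"
  define co where "co = - (2 * real k) * z"
  have as: "a s = co * x s" for s unfolding a_def co_def z_def by (simp add: algebra_simps)
  have MX: "mul (X x) h = (\<Sum>s\<in>S. x s *\<^sub>R mul (v s) h)" for h
    unfolding Xs by (simp add: bl_lsum[OF bl] bilinear_lmul[OF bl])
  have H_e: "(\<Sum>s\<in>S. mul (v s) (a s *\<^sub>R G)) = co *\<^sub>R mul (X x) G"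
    unfolding MX as by (simp add: bilinear_rmul[OF bl] scaleR_sum_right)
  have H_o: "(\<Sum>s\<in>S. mul (v s) (a s *\<^sub>R mul (X x) G + c x *\<^sub>R mul (v s) G))
      = (co * (- N x) - real q * c x) *\<^sub>R G"
  proof -
    have "(\<Sum>s\<in>S. mul (v s) (a s *\<^sub>R mul (X x) G + c x *\<^sub>R mul (v s) G))
        = (\<Sum>s\<in>S. a s *\<^sub>R mul (v s) (mul (X x) G)) + (\<Sum>s\<in>S. c x *\<^sub>R mul (v s) (mul (v s) G))"
      by (simp add: bilinear_radd[OF bl] bilinear_rmul[OF bl] sum.distrib)
    also have "(\<Sum>s\<in>S. a s *\<^sub>R mul (v s) (mul (X x) G)) = co *\<^sub>R mul (X x) (mul (X x) G)"
      unfolding MX[of "mul (X x) G"] as by (simp add: scaleR_sum_right)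
    also have "\<dots> = (co * (- N x)) *\<^sub>R G"
      using a0[of "X x" G, symmetric] Xsq[of x] unit by (simp add: bilinear_lmul[OF bl] bilinear_lneg[OF bl])
    also have "(\<Sum>s\<in>S. c x *\<^sub>R mul (v s) (mul (v s) G)) = (\<Sum>s\<in>S. - (c x *\<^sub>R G))"
      by (rule sum.cong) (simp_all add: vsS)
    also have "\<dots> = - (real q * c x) *\<^sub>R G" using cardS by (simp add: sum_negf sum_constant_scaleR)
    finally show ?thesis by (simp add: scaleR_diff_left)
  qed
  have kz: "co * (- N x) = - (2 * real k) * c x"
  proof -
    have "co * (- N x) = - 2 * (real k * (- N x)^(k-1) * (- N x))"
      unfolding co_def z_def by (simp only: mult.assoc mult.left_commute mult_minus_left)
    also have "\<dots> = - 2 * (real k * c x)" unfolding c_def kpow ..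
    finally show ?thesis by simp
  qed
  have T: "real (2*k) *\<^sub>R mul (apow mul e (X x) (2*k-1)) G = (- co) *\<^sub>R mul (X x) G"
  proof (cases "k = 0")
    case True then show ?thesis unfolding co_def by simp
  next
    case False then show ?thesis using ap1[of x] unfolding co_def z_def by (simp add: bilinear_lmul[OF bl])
  qed
  have apx: "apow mul e (xq v p m x) n = apow mul e (X x) n" for n by (simp add: X_def)
  have DopP: "Dop mul v p g x = dg 0 + (\<Sum>s\<in>{1..p}. mul (v s) (dg s))"
    unfolding Dop_def sumsplit3 dg_def using v0 unit by simp
  have DbarP: "Dbar mul v p g x = dg 0 - (\<Sum>s\<in>{1..p}. mul (v s) (dg s))"
    unfolding Dbar_def dg_def by simp
  have PEm: "(\<Sum>s\<le>m. mul (v s) (partial (\<lambda>y. c y *\<^sub>R g y) s x))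
      = (\<Sum>s\<le>p. mul (v s) (c x *\<^sub>R dg s)) + (\<Sum>s\<in>S. mul (v s) (a s *\<^sub>R G))"
    unfolding sumsplit by (intro arg_cong2[where f="(+)"] sum.cong) (simp_all add: pe_low highs)
  have POm: "(\<Sum>s\<le>m. mul (v s) (partial (\<lambda>y. c y *\<^sub>R mul (X y) (g y)) s x))
      = (\<Sum>s\<le>p. mul (v s) (c x *\<^sub>R mul (X x) (dg s)))
        + (\<Sum>s\<in>S. mul (v s) (a s *\<^sub>R mul (X x) G + c x *\<^sub>R mul (v s) G))"
    unfolding sumsplit by (intro arg_cong2[where f="(+)"] sum.cong) (simp_all add: po_low highs)
  have PEb: "(\<Sum>s\<in>{1..m}. mul (v s) (partial (\<lambda>y. c y *\<^sub>R g y) s x))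
      = (\<Sum>s\<in>{1..p}. mul (v s) (c x *\<^sub>R dg s)) + (\<Sum>s\<in>S. mul (v s) (a s *\<^sub>R G))"
    unfolding sumsplit2 by (intro arg_cong2[where f="(+)"] sum.cong) (simp_all add: pe_low highs)
  have POb: "(\<Sum>s\<in>{1..m}. mul (v s) (partial (\<lambda>y. c y *\<^sub>R mul (X y) (g y)) s x))
      = (\<Sum>s\<in>{1..p}. mul (v s) (c x *\<^sub>R mul (X x) (dg s)))
        + (\<Sum>s\<in>S. mul (v s) (a s *\<^sub>R mul (X x) G + c x *\<^sub>R mul (v s) G))"
    unfolding sumsplit2 by (intro arg_cong2[where f="(+)"] sum.cong) (simp_all add: po_low highs)
  have lowE: "(\<Sum>s\<le>p. mul (v s) (c x *\<^sub>R dg s)) = c x *\<^sub>R Dop mul v p g x"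
    unfolding Dop_def dg_def by (simp add: bilinear_rmul[OF bl] scaleR_sum_right)
  have lowEb: "(\<Sum>s\<in>{1..p}. mul (v s) (c x *\<^sub>R dg s)) = c x *\<^sub>R (\<Sum>s\<in>{1..p}. mul (v s) (dg s))"
    by (simp add: bilinear_rmul[OF bl] scaleR_sum_right)
  have lowOb: "(\<Sum>s\<in>{1..p}. mul (v s) (c x *\<^sub>R mul (X x) (dg s)))
      = - (c x *\<^sub>R mul (X x) (\<Sum>s\<in>{1..p}. mul (v s) (dg s)))"
  proof -
    have "(\<Sum>s\<in>{1..p}. mul (v s) (c x *\<^sub>R mul (X x) (dg s)))
        = (\<Sum>s\<in>{1..p}. - (c x *\<^sub>R mul (X x) (mul (v s) (dg s))))"
      by (rule sum.cong) (simp_all add: bilinear_rmul[OF bl] anti_low)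
    then show ?thesis by (simp add: sum_negf bl_rsum[OF bl] scaleR_sum_right)
  qed
  have lowO: "(\<Sum>s\<le>p. mul (v s) (c x *\<^sub>R mul (X x) (dg s))) = c x *\<^sub>R mul (X x) (Dbar mul v p g x)"
    unfolding sumsplit3 lowOb DbarP using v0 unit by (simp add: bilinear_rsub[OF bl] scaleR_diff_right)
  have R1: "Dop mul v m (\<lambda>y. mul (apow mul e (xq v p m y) (2*k)) (g y)) x
       = mul (apow mul e (xq v p m x) (2*k)) (Dop mul v p g x)
         - real (2*k) *\<^sub>R mul (apow mul e (xq v p m x) (2*k - 1)) (g x)"
    unfolding fe apx T[unfolded G_def] Dop_def[of mul v m] PEm lowE H_e
    using ap[of x] unit by (simp add: bilinear_lmul[OF bl] G_def)
  have R2: "Dop mul v m (\<lambda>y. mul (apow mul e (xq v p m y) (2*k+1)) (g y)) x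
       = mul (apow mul e (xq v p m x) (2*k+1)) (Dbar mul v p g x)
         - real (2*k + q) *\<^sub>R mul (apow mul e (xq v p m x) (2*k)) (g x)"
    unfolding fo apx Dop_def[of mul v m] POm lowO H_o kz
    using ap[of x] unit by (simp add: bilinear_lmul[OF bl] G_def algebra_simps del: apow.simps)
  have R3: "Dbar mul v m (\<lambda>y. mul (apow mul e (xq v p m y) (2*k)) (g y)) x
       = mul (apow mul e (xq v p m x) (2*k)) (Dbar mul v p g x)
         + real (2*k) *\<^sub>R mul (apow mul e (xq v p m x) (2*k - 1)) (g x)"
    unfolding fe apx T[unfolded G_def] Dbar_def[of mul v m] PEb lowEb H_e DbarP pe_low[OF le0]
    using ap[of x] unit by (simp add: bilinear_lmul[OF bl] G_def algebra_simps)
  have R4: "Dbar mul v m (\<lambda>y. mul (apow mul e (xq v p m y) (2*k+1)) (g y)) x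
       = mul (apow mul e (xq v p m x) (2*k+1)) (Dop mul v p g x)
         + real (2*k + q) *\<^sub>R mul (apow mul e (xq v p m x) (2*k)) (g x)"
    unfolding fo apx Dbar_def[of mul v m] POb lowOb H_o kz DopP po_low[OF le0]
    using ap[of x] unit by (simp add: bilinear_lmul[OF bl] bilinear_radd[OF bl] G_def algebra_simps del: apow.simps)
  show ?thesis using R1 R2 R3 R4 by blast
qed


theorem lemma3p9:
  fixes mul :: "'a::euclidean_space \<Rightarrow> 'a \<Rightarrow> 'a" and e :: 'a and cj :: "'a \<Rightarrow> 'a"
    and v :: "nat \<Rightarrow> 'a" and m p q k :: nat
    and g :: "(nat \<Rightarrow> real) \<Rightarrow> 'a" and x :: "nat \<Rightarrow> real"
  assumes alg: "alt_algebra mul e"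
    and dim: "DIM('a) > 1"
    and inv: "anti_involution mul e cj"
    and sph_ne: "sphere_A mul e cj \<noteq> {}"
    and m1: "m \<ge> 1"
    and v0: "v 0 = e"
    and vS: "\<forall>s\<in>{1..m}. v s \<in> sphere_A mul e cj"
    and vanti: "\<forall>s\<in>{1..m}. \<forall>t\<in>{1..m}. s \<noteq> t \<longrightarrow> mul (v s) (v t) = - mul (v t) (v s)"
    and vindep: "\<forall>c::nat \<Rightarrow> real. (\<Sum>s\<le>m. c s *\<^sub>R v s) = 0 \<longrightarrow> (\<forall>s\<le>m. c s = 0)"
    and MQ: "span (v ` {0..m}) \<subseteq> quadcone_A mul e cj"
    and Rsub: "reals_in e \<subset> span (v ` {0..m})"
    and p: "p \<le> m - 1"
    and q: "q = m - p"
    and g: "C1_in_first p g"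
  shows
    "(Dop mul v m (\<lambda>y. mul (apow mul e (xq v p m y) (2*k)) (g y)) x
       = mul (apow mul e (xq v p m x) (2*k)) (Dop mul v p g x)
         - real (2*k) *\<^sub>R mul (apow mul e (xq v p m x) (2*k - 1)) (g x))
   \<and> (Dop mul v m (\<lambda>y. mul (apow mul e (xq v p m y) (2*k+1)) (g y)) x
       = mul (apow mul e (xq v p m x) (2*k+1)) (Dbar mul v p g x)
         - real (2*k + q) *\<^sub>R mul (apow mul e (xq v p m x) (2*k)) (g x))
   \<and> (Dbar mul v m (\<lambda>y. mul (apow mul e (xq v p m y) (2*k)) (g y)) x
       = mul (apow mul e (xq v p m x) (2*k)) (Dbar mul v p g x)
         + real (2*k) *\<^sub>R mul (apow mul e (xq v p m x) (2*k - 1)) (g x))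
   \<and> (Dbar mul v m (\<lambda>y. mul (apow mul e (xq v p m y) (2*k+1)) (g y)) x
       = mul (apow mul e (xq v p m x) (2*k+1)) (Dop mul v p g x)
         + real (2*k + q) *\<^sub>R mul (apow mul e (xq v p m x) (2*k)) (g x))"
  using core_lemma[OF alg inv m1 v0 vS vanti p q g] .

end
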